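(* Let $a,b,c,p\in\mathbb{C}$ with $-c\notin\mathbb{N}\cup\{0\}$. Suppose that \[ e^{-p\arctan z}F(a,b;c;z)=\sum_{n=0}^\infty u_nz^n,\qquad |z|<1. \] Then $u_0=1$, $u_1=\frac{ab}{c}-p$, $u_2=-\frac{abp}{c}+\frac{a(a+1)b(b+1)}{2c(c+1)}+\frac{p^2}{2}$, $u_3=\frac{abp^2}{2c}-\frac{a(a+1)b(b+1)p}{2c(c+1)}+\frac{a(a+1)(a+2)b(b+1)(b+2)}{6c(c+1)(c+2)}+\frac13\left(p-\frac{p^3}{2}\right)$, \[ u_4=\frac1{24}\left(\frac{6a(a+1)b(b+1)p^2}{c(c+1)}-\frac{4ab(p^2-2)p}{c}-\frac{4(a)_3(b)_3p}{(c)_3}+\frac{(a)_4(b)_4}{(c)_4}+p^4-8p^2\right), \] and for all integers $n\ge4$, \[ u_{n+1}=\beta_0(n)u_n+\beta_1(n)u_{n-1}+\beta_2(n)u_{n-2}+\beta_3(n)u_{n-3}+\beta_4(n)u_{n-4}, \] where \[ \begin{aligned} \beta_0(n)&=\frac{(a+n)(b+n)-p(c+2n)}{(n+1)(c+n)},\qquad \beta_1(n)=\frac{p(a+b+2n-1)-2(n-1)(c+n-2)-p^2}{(n+1)(c+n)},\\ \beta_2(n)&=\frac{2(a+n-2)(b+n-2)-p(c+2n-6)+p^2}{(n+1)(c+n)},\qquad \beta_3(n)=\frac{p(a+b+2n-7)-(n-3)(c+n-4)}{(n+1)(c+n)},\\ \beta_4(n)&=\frac{(a+n-4)(b+n-4)}{(n+1)(c+n)}.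 \end{aligned} \]
   Context: $\arctan$ denotes the principal branch, analytic on the unit disc with $\arctan0=0$. For $a\in\mathbb{C}$, $(a)_n=a(a+1)\cdots(a+n-1)$ denotes the Pochhammer symbol, with $(a)_0=1$. For $a,b,c\in\mathbb{C}$ with $-c\notin\mathbb{N}\cup\{0\}$, the Gaussian hypergeometric function is $F(a,b;c;z)=\sum_{n=0}^\infty \frac{(a)_n(b)_n}{(c)_n\,n!}z^n$, $|z|<1$. *)

theory Defs
  imports "HOL-Analysis.Analysis"
begin

definition hypgeom :: "complex \<Rightarrow> complex \<Rightarrow> complex \<Rightarrow> complex \<Rightarrow> complex" where
  "hypgeom a b c z =
     (\<Sum>n. pochhammer a n * pochhammer b n / (pochhammer c n * fact n) * z ^ n)"

end

theory Submission
  imports Defs "HOL-Real_Asymp.Real_Asymp" "HOL-Complex_Analysis.Complex_Analysis"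
begin


definition hgc where "hgc a b c n = pochhammer a n * pochhammer b n / (pochhammer c n * fact n :: complex)"

lemma hc_Suc:
  assumes hc: "\<And>m::nat. c \<noteq> - of_nat m"
  shows "hgc a b c (Suc n) = hgc a b c n * ((a + of_nat n) * (b + of_nat n) / ((c + of_nat n) * (of_nat n + 1)))"
proof -
  have "pochhammer c n \<noteq> 0" using hc by (auto simp: pochhammer_eq_0_iff)
  moreover have "c + of_nat n \<noteq> 0" using hc[of n] by (auto simp: add_eq_0_iff)
  ultimately show ?thesis unfolding hgc_def
    by (simp add: pochhammer_Suc field_simps)
qed

lemma lim_aux: "(\<lambda>n::nat. (A + real n) * (B + real n) / ((real n - C) * (real n + 1))) \<longlonglongrightarrow> 1"
  by real_asymp

lemma ev_aux: "eventually (\<lambda>n. real n > C) sequentially"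
  by real_asymp

lemma t1: "norm (of_nat n + 1 :: complex) = real n + 1"
  by (metis norm_of_nat of_nat_Suc add.commute of_nat_1 of_nat_add)

lemma t2: fixes a b c :: complex 
  assumes pos: "real n - norm c > 0" and cn: "norm (c + of_nat n) \<ge> real n - norm c"
  shows "norm ((a + of_nat n) * (b + of_nat n) / ((c + of_nat n) * (of_nat n + 1))) \<le> (norm a + real n) * (norm b + real n) / ((real n - norm c) * (real n + 1))"
proof -
  have "norm ((a + of_nat n) * (b + of_nat n) / ((c + of_nat n) * (of_nat n + 1)))
          = norm (a + of_nat n) * norm (b + of_nat n) / (norm (c + of_nat n) * (real n + 1))"
    by (simp add: norm_mult norm_divide t1)
  also have "\<dots> \<le> (norm a + real n) * (norm b + real n) / ((real n - norm c) * (real n + 1))"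
  proof (rule frac_le)
    show "0 \<le> (norm a + real n) * (norm b + real n)" by simp
    show "norm (a + of_nat n) * norm (b + of_nat n) \<le> (norm a + real n) * (norm b + real n)"
      apply (rule mult_mono)
      using norm_triangle_ineq[of a "of_nat n"] norm_triangle_ineq[of b "of_nat n"] by auto
    show "0 < (real n - norm c) * (real n + 1)" using pos by simp
    show "(real n - norm c) * (real n + 1) \<le> norm (c + of_nat n) * (real n + 1)"
      using cn by (intro mult_right_mono) auto
  qed
  finally show ?thesis .
qed

lemma t3: fixes r x K q :: real assumes "r \<le> R" "R * x < K" "x \<ge> 0" "q \<ge> 0"
  shows "q * r * x \<le> K * q"
proof -
  have "r * x \<le> K" using assms by (meson less_eq_real_def mult_right_mono order_trans)
  then show ?thesis using assms(4) by (metis mult.assoc mult.commute mult_left_mono)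
qed

lemma hc_summable:
  assumes hc: "\<And>m::nat. c \<noteq> - of_nat m" and z: "norm z < 1"
  shows "summable (\<lambda>n. hgc a b c n * z ^ n)"
proof -
  define R where "R = (\<lambda>n::nat. (norm a + real n) * (norm b + real n) / ((real n - norm c) * (real n + 1)))"
  have "(\<lambda>n. R n * norm z) \<longlonglongrightarrow> 1 * norm z"
    unfolding R_def by (intro tendsto_intros lim_aux)
  moreover have "1 * norm z < (1 + norm z) / 2" using z by simp
  ultimately have ev1: "eventually (\<lambda>n. R n * norm z < (1 + norm z) / 2) sequentially"
    using order_tendstoD(2) by blast
  from eventually_conj[OF ev1 ev_aux[of "norm c"]] obtain N where N: "\<And>n. n \<ge> N \<Longrightarrow> R n * norm z < (1 + norm z) / 2 \<and> real n > norm c"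
    unfolding eventually_sequentially by blast
  show ?thesis
  proof (rule summable_ratio_test[of "(1 + norm z) / 2" N])
    show "(1 + norm z) / 2 < 1" using z by simp
  next
    fix n assume n: "n \<ge> N"
    have cn: "norm (c + of_nat n) \<ge> real n - norm c"
      using norm_triangle_ineq2[of "of_nat n" "-c"] by (simp add: add.commute)
    have pos: "real n - norm c > 0" using N[OF n] by simp
    have r: "norm ((a + of_nat n) * (b + of_nat n) / ((c + of_nat n) * (of_nat n + 1))) \<le> R n"
      unfolding R_def by (rule t2[OF pos cn])
    have "norm (hgc a b c (Suc n) * z ^ Suc n) = norm (hgc a b c n * z ^ n) * norm ((a + of_nat n) * (b + of_nat n) / ((c + of_nat n) * (of_nat n + 1))) * norm z"
    proof -
      have "hgc a b c (Suc n) * z ^ Suc n = (hgc a b c n * z ^ n) * ((a + of_nat n) * (b + of_nat n) / ((c + of_nat n) * (of_nat n + 1))) * z"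
        unfolding hc_Suc[OF hc] by (simp add: mult_ac)
      then show ?thesis by (simp only: norm_mult)
    qed
    also have "\<dots> \<le> (1 + norm z) / 2 * norm (hgc a b c n * z ^ n)"
      by (rule t3[OF r]) (use N[OF n] in auto)
    finally show "norm (hgc a b c (Suc n) * z ^ Suc n) \<le> (1 + norm z) / 2 * norm (hgc a b c n * z ^ n)" .
  qed
qed



lemma fps_exp_unique:
  fixes F G :: "complex fps"
  assumes "f has_fps_expansion F" "f has_fps_expansion G" shows "F = G"
  by (rule fps_ext) (simp add: fps_nth_fps_expansion[OF assms(1)] fps_nth_fps_expansion[OF assms(2)])

lemma one_plus_sq_nz: "norm (z::complex) < 1 \<Longrightarrow> 1 + z * z \<noteq> 0"
proof
  assume "norm z < 1" "1 + z * z = 0"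
  then have "z * z = -1" by (simp add: add_eq_0_iff)
  then have "norm (z * z) = 1" by simp
  then have "norm z * norm z = 1" by (simp add: norm_mult)
  with \<open>norm z < 1\<close> show False
    by (metis mult_strict_mono' norm_ge_zero mult_1 less_irrefl)
qed

lemma arctan_ok: "norm (z::complex) < 1 \<Longrightarrow> Re z = 0 \<Longrightarrow> \<bar>Im z\<bar> < 1"
  using abs_Im_le_cmod[of z] by linarith

lemma ff_holo: "(\<lambda>z. exp (- p * Arctan z)) holomorphic_on ball 0 1"
  by (intro holomorphic_intros holomorphic_on_Arctan) (auto intro: arctan_ok)

lemma ff_deriv:
  assumes "norm z < 1"
  shows "((\<lambda>z. exp (- p * Arctan z)) has_field_derivative (exp (- p * Arctan z) * (- p * inverse (1 + z\<^sup>2)))) (at z)"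
  by (rule derivative_eq_intros refl | use arctan_ok[OF assms] in simp)+

lemma E_ode:
  fixes p :: complex
  defines "E \<equiv> fps_expansion (\<lambda>z. exp (- p * Arctan z)) 0"
  shows "(\<lambda>z. exp (- p * Arctan z)) has_fps_expansion E"
    and "(1 + fps_X * fps_X) * fps_deriv E + fps_const p * E = 0"
proof -
  let ?f = "\<lambda>z. exp (- p * Arctan z)"
  show fE: "?f has_fps_expansion E"
    unfolding E_def by (rule has_fps_expansion_fps_expansion[OF _ _ ff_holo]) auto
  have 1: "(\<lambda>z. (1 + z * z) * deriv ?f z) has_fps_expansion (1 + fps_X * fps_X) * fps_deriv E"
    by (intro has_fps_expansion_mult has_fps_expansion_add has_fps_expansion_1 has_fps_expansion_fps_X
          has_fps_expansion_deriv fE)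
  have ev: "eventually (\<lambda>z. z \<in> ball 0 1) (nhds (0::complex))"
    by (intro eventually_nhds_in_open) auto
  have evq: "eventually (\<lambda>z. (1 + z * z) * deriv ?f z = (-p) * ?f z) (nhds 0)"
  proof (rule eventually_mono[OF ev])
    fix z :: complex assume "z \<in> ball 0 1"
    then have z: "norm z < 1" by simp
    have "deriv ?f z = exp (- p * Arctan z) * (- p * inverse (1 + z\<^sup>2))"
      by (rule DERIV_imp_deriv[OF ff_deriv[OF z]])
    then show "(1 + z * z) * deriv ?f z = (-p) * ?f z"
      using one_plus_sq_nz[OF z] by (simp add: power2_eq_square field_simps)
  qed
  then have "(\<lambda>z. (-p) * ?f z) has_fps_expansion (1 + fps_X * fps_X) * fps_deriv E"
    using has_fps_expansion_cong[OF evq refl] 1 by simp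
  moreover have "(\<lambda>z. (-p) * ?f z) has_fps_expansion fps_const (-p) * E"
    by (intro has_fps_expansion_cmult_left fE)
  ultimately have "(1 + fps_X * fps_X) * fps_deriv E = fps_const (-p) * E"
    by (rule fps_exp_unique)
  moreover have "fps_const (-p) * E + fps_const p * E = 0"
    by (simp flip: distrib_right fps_const_add)
  ultimately show "(1 + fps_X * fps_X) * fps_deriv E + fps_const p * E = 0"
    by simp
qed



lemma H_ode:
  fixes a b c :: complex
  assumes hc: "\<And>m::nat. c \<noteq> - of_nat m"
  defines "H \<equiv> Abs_fps (hgc a b c)"
  shows "fps_X * (1 - fps_X) * fps_deriv (fps_deriv H)
     + (fps_const c - (fps_const a + fps_const b + 1) * fps_X) * fps_deriv H
     - fps_const a * fps_const b * H = 0"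
proof (rule fps_ext)
  fix n
  have e: "fps_X * (1 - fps_X) * fps_deriv (fps_deriv H)
     + (fps_const c - (fps_const a + fps_const b + 1) * fps_X) * fps_deriv H
     - fps_const a * fps_const b * H
     = fps_X * fps_deriv (fps_deriv H) - fps_X * (fps_X * fps_deriv (fps_deriv H))
       + fps_const c * fps_deriv H - fps_const a * (fps_X * fps_deriv H)
       - fps_const b * (fps_X * fps_deriv H) - fps_X * fps_deriv H - fps_const a * (fps_const b * H)"
    by (simp del: fps_const_add fps_const_mult fps_const_neg fps_const_sub add: algebra_simps)
  have cn: "c + of_nat n \<noteq> 0" using hc[of n] by (auto simp: add_eq_0_iff)
  have s: "(c + of_nat n) * (of_nat n + 1) * hgc a b c (Suc n) = (a + of_nat n) * (b + of_nat n) * hgc a b c n"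
  proof -
    have n1: "(of_nat n + 1 :: complex) \<noteq> 0"
      by (metis of_nat_Suc of_nat_eq_0_iff add.commute nat.distinct(1))
    have D: "(c + of_nat n) * (of_nat n + 1) \<noteq> 0" using cn n1 by simp
    have "(c + of_nat n) * (of_nat n + 1) * hgc a b c (Suc n) = hgc a b c n * ((a + of_nat n) * (b + of_nat n) / ((c + of_nat n) * (of_nat n + 1))) * ((c + of_nat n) * (of_nat n + 1))"
      unfolding hc_Suc[OF hc] by (simp only: mult_ac)
    also have "\<dots> = hgc a b c n * ((a + of_nat n) * (b + of_nat n))"
      using D by (simp del: of_nat_add)
    finally show ?thesis by (simp only: mult_ac)
  qed
  have cf: "(fps_X * fps_deriv (fps_deriv H) - fps_X * (fps_X * fps_deriv (fps_deriv H))
       + fps_const c * fps_deriv H - fps_const a * (fps_X * fps_deriv H)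
       - fps_const b * (fps_X * fps_deriv H) - fps_X * fps_deriv H - fps_const a * (fps_const b * H)) $ n
     = (c + of_nat n) * (of_nat n + 1) * hgc a b c (Suc n) - (a + of_nat n) * (b + of_nat n) * hgc a b c n"
  proof (cases n)
    case 0
    then show ?thesis by (simp add: H_def algebra_simps)
  next
    case (Suc m)
    then show ?thesis
    proof (cases m)
      case 0
      then show ?thesis using \<open>n = Suc m\<close> by (simp add: H_def algebra_simps)
    next
      case (Suc k)
      then show ?thesis using \<open>n = Suc m\<close> by (simp add: H_def algebra_simps)
    qed
  qed
  then have "(fps_X * fps_deriv (fps_deriv H) - fps_X * (fps_X * fps_deriv (fps_deriv H))
       + fps_const c * fps_deriv H - fps_const a * (fps_X * fps_deriv H)
       - fps_const b * (fps_X * fps_deriv H) - fps_X * fps_deriv H - fps_const a * (fps_const b * H)) $ n = 0"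
    using s by simp
  then show "(fps_X * (1 - fps_X) * fps_deriv (fps_deriv H)
     + (fps_const c - (fps_const a + fps_const b + 1) * fps_X) * fps_deriv H
     - fps_const a * fps_const b * H) $ n = 0 $ n" unfolding e by simp
qed



lemma div5:
  fixes D :: "'a::field"
  shows "(x0*y0 + x1*y1 + x2*y2 + x3*y3 + x4*y4) / D = x0/D*y0 + x1/D*y1 + x2/D*y2 + x3/D*y3 + x4/D*y4"
  by (simp add: add_divide_distrib)

definition Lexp :: "'a::comm_ring_1 \<Rightarrow> 'a \<Rightarrow> 'a \<Rightarrow> 'a \<Rightarrow> 'a \<Rightarrow> 'a \<Rightarrow> 'a \<Rightarrow> 'a \<Rightarrow> 'a" where
  "Lexp X P C A B G DG D2G = (X*D2G - X^2*D2G + 2*(X^3*D2G) - 2*(X^4*D2G) + X^5*D2G - X^6*D2G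
 + C*DG + 2*(P*(X*DG)) - A*(X*DG) - B*(X*DG) - X*DG + 2*(C*(X^2*DG)) - 2*(P*(X^2*DG))
 + 2*(P*(X^3*DG)) - 2*(A*(X^3*DG)) - 2*(B*(X^3*DG)) - 2*(X^3*DG) + C*(X^4*DG) - 2*(P*(X^4*DG))
 - A*(X^5*DG) - B*(X^5*DG) - X^5*DG
 + P*(C*G) - A*(B*G) + P*(P*(X*G)) - P*(A*(X*G)) - P*(B*(X*G)) - P*(X*G) + P*(C*(X^2*G))
 - P*(P*(X^2*G)) - 2*(P*(X^2*G)) - 2*(A*(B*(X^2*G))) + 2*(P*(X^3*G)) - P*(A*(X^3*G))
 - P*(B*(X^3*G)) - P*(X^3*G) - A*(B*(X^4*G)))"

lemma ringL0:
  fixes X P C A B E DE D2E H DH D2H G DG D2G :: "'a::comm_ring_1"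
  assumes R1: "(1+X*X)*DE + P*E = 0"
  and R2: "2*X*DE + (1+X*X)*D2E + P*DE = 0"
  and HO: "X*(1-X)*D2H + (C - (A+B+1)*X)*DH - A*B*H = 0"
  and d2: "D2G = D2E*H + 2*DE*DH + E*D2H" and d1: "DG = DE*H + E*DH" and d0: "G = E*H"
  shows "X*D2G - X^2*D2G + 2*(X^3*D2G) - 2*(X^4*D2G) + X^5*D2G - X^6*D2G
 + C*DG + 2*(P*(X*DG)) - A*(X*DG) - B*(X*DG) - X*DG + 2*(C*(X^2*DG)) - 2*(P*(X^2*DG))
 + 2*(P*(X^3*DG)) - 2*(A*(X^3*DG)) - 2*(B*(X^3*DG)) - 2*(X^3*DG) + C*(X^4*DG) - 2*(P*(X^4*DG))
 - A*(X^5*DG) - B*(X^5*DG) - X^5*DG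
 + P*(C*G) - A*(B*G) + P*(P*(X*G)) - P*(A*(X*G)) - P*(B*(X*G)) - P*(X*G) + P*(C*(X^2*G))
 - P*(P*(X^2*G)) - 2*(P*(X^2*G)) - 2*(A*(B*(X^2*G))) + 2*(P*(X^3*G)) - P*(A*(X^3*G))
 - P*(B*(X^3*G)) - P*(X^3*G) - A*(B*(X^4*G)) = 0"
proof -
  have "X*D2G - X^2*D2G + 2*(X^3*D2G) - 2*(X^4*D2G) + X^5*D2G - X^6*D2G
 + C*DG + 2*(P*(X*DG)) - A*(X*DG) - B*(X*DG) - X*DG + 2*(C*(X^2*DG)) - 2*(P*(X^2*DG))
 + 2*(P*(X^3*DG)) - 2*(A*(X^3*DG)) - 2*(B*(X^3*DG)) - 2*(X^3*DG) + C*(X^4*DG) - 2*(P*(X^4*DG))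
 - A*(X^5*DG) - B*(X^5*DG) - X^5*DG
 + P*(C*G) - A*(B*G) + P*(P*(X*G)) - P*(A*(X*G)) - P*(B*(X*G)) - P*(X*G) + P*(C*(X^2*G))
 - P*(P*(X^2*G)) - 2*(P*(X^2*G)) - 2*(A*(B*(X^2*G))) + 2*(P*(X^3*G)) - P*(A*(X^3*G))
 - P*(B*(X^3*G)) - P*(X^3*G) - A*(B*(X^4*G))
   = (2*X*(1-X)*(1+X*X)*DH + (P*X*(1-X) + (C-(A+B+1)*X)*(1+X*X) - 2*X*X*(1-X))*H) * ((1+X*X)*DE + P*E)
     + X*(1-X)*(1+X*X)*H * (2*X*DE + (1+X*X)*D2E + P*DE)
     + (1+X*X)^2*E*(X*(1-X)*D2H + (C - (A+B+1)*X)*DH - A*B*H)"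
    unfolding d2 d1 d0 by (simp add: algebra_simps power2_eq_square eval_nat_numeral)
  then show ?thesis using R1 R2 HO by simp
qed

lemma ringL:
  fixes X P C A B E DE D2E H DH D2H G DG D2G :: "'a::comm_ring_1"
  assumes R1: "(1+X*X)*DE + P*E = 0"
  and R2: "2*X*DE + (1+X*X)*D2E + P*DE = 0"
  and HO: "X*(1-X)*D2H + (C - (A+B+1)*X)*DH - A*B*H = 0"
  and d2: "D2G = D2E*H + 2*DE*DH + E*D2H" and d1: "DG = DE*H + E*DH" and d0: "G = E*H"
  shows "Lexp X P C A B G DG D2G = 0"
  unfolding Lexp_def
  by (rule ringL0[OF assms])


theorem theorem3p7:
  fixes a b c p :: complex and u :: "nat \<Rightarrow> complex"
  assumes hc: "\<And>m::nat. c \<noteq> - of_nat m"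
    and hu: "\<And>z::complex. norm z < 1 \<Longrightarrow>
               (\<lambda>n. u n * z ^ n) sums (exp (- p * Arctan z) * hypgeom a b c z)"
  defines "\<beta>0 \<equiv> \<lambda>n::nat. ((a + of_nat n) * (b + of_nat n) - p * (c + 2 * of_nat n))
                              / ((of_nat n + 1) * (c + of_nat n))"
    and "\<beta>1 \<equiv> \<lambda>n::nat. (p * (a + b + 2 * of_nat n - 1) - 2 * (of_nat n - 1) * (c + of_nat n - 2) - p ^ 2)
                              / ((of_nat n + 1) * (c + of_nat n))"
    and "\<beta>2 \<equiv> \<lambda>n::nat. (2 * (a + of_nat n - 2) * (b + of_nat n - 2) - p * (c + 2 * of_nat n - 6) + p ^ 2)
                              / ((of_nat n + 1) * (c + of_nat n))"
    and "\<beta>3 \<equiv> \<lambda>n::nat. (p * (a + b + 2 * of_nat n - 7) - (of_nat n - 3) * (c + of_nat n - 4))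
                              / ((of_nat n + 1) * (c + of_nat n))"
    and "\<beta>4 \<equiv> \<lambda>n::nat. ((a + of_nat n - 4) * (b + of_nat n - 4))
                              / ((of_nat n + 1) * (c + of_nat n))"
  shows "u 0 = 1
    \<and> u 1 = a * b / c - p
    \<and> u 2 = - (a * b * p / c) + a * (a + 1) * b * (b + 1) / (2 * c * (c + 1)) + p ^ 2 / 2
    \<and> u 3 = a * b * p ^ 2 / (2 * c) - a * (a + 1) * b * (b + 1) * p / (2 * c * (c + 1))
            + a * (a + 1) * (a + 2) * b * (b + 1) * (b + 2) / (6 * c * (c + 1) * (c + 2))
            + (1 / 3) * (p - p ^ 3 / 2)
    \<and> u 4 = (1 / 24) * (6 * a * (a + 1) * b * (b + 1) * p ^ 2 / (c * (c + 1))
            - 4 * a * b * (p ^ 2 - 2) * p / c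
            - 4 * pochhammer a 3 * pochhammer b 3 * p / pochhammer c 3
            + pochhammer a 4 * pochhammer b 4 / pochhammer c 4
            + p ^ 4 - 8 * p ^ 2)
    \<and> (\<forall>n::nat. n \<ge> 4 \<longrightarrow>
          u (n + 1) = \<beta>0 n * u n + \<beta>1 n * u (n - 1) + \<beta>2 n * u (n - 2)
                      + \<beta>3 n * u (n - 3) + \<beta>4 n * u (n - 4))"
proof -
  define E where "E = fps_expansion (\<lambda>z. exp (- p * Arctan z)) 0"
  define H where "H = Abs_fps (hgc a b c)"
  define G where "G = Abs_fps u"
  have fE: "(\<lambda>z. exp (- p * Arctan z)) has_fps_expansion E"
    and R1: "(1 + fps_X * fps_X) * fps_deriv E + fps_const p * E = 0"
    using E_ode[of p] unfolding E_def by auto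
  have ev: "eventually (\<lambda>z. z \<in> ball 0 1) (nhds (0::complex))"
    by (intro eventually_nhds_in_open) auto
  have fH: "hypgeom a b c has_fps_expansion H"
  proof (rule has_fps_expansionI)
    show "eventually (\<lambda>z. (\<lambda>n. H $ n * z ^ n) sums hypgeom a b c z) (nhds 0)"
    proof (rule eventually_mono[OF ev])
      fix z :: complex assume "z \<in> ball 0 1"
      then have "norm z < 1" by simp
      from summable_sums[OF hc_summable[OF hc this, of a b]]
      show "(\<lambda>n. H $ n * z ^ n) sums hypgeom a b c z" by (simp add: H_def hypgeom_def hgc_def)
    qed
  qed
  have fG: "(\<lambda>z. exp (- p * Arctan z) * hypgeom a b c z) has_fps_expansion G"
  proof (rule has_fps_expansionI)
    show "eventually (\<lambda>z. (\<lambda>n. G $ n * z ^ n) sums (exp (- p * Arctan z) * hypgeom a b c z)) (nhds 0)"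
    proof (rule eventually_mono[OF ev])
      fix z :: complex assume "z \<in> ball 0 1"
      then have "norm z < 1" by simp
      from hu[OF this] show "(\<lambda>n. G $ n * z ^ n) sums (exp (- p * Arctan z) * hypgeom a b c z)"
        by (simp add: G_def)
    qed
  qed
  have GEH: "G = E * H"
    using fps_exp_unique[OF fG has_fps_expansion_mult[OF fE fH]] .
  have uG: "u n = G $ n" for n by (simp add: G_def)
  have R2: "2*fps_X*fps_deriv E + (1+fps_X*fps_X)*fps_deriv (fps_deriv E) + fps_const p * fps_deriv E = 0"
  proof -
    have "fps_deriv ((1 + fps_X * fps_X) * fps_deriv E + fps_const p * E) = 0" using R1 by simp
    moreover have "fps_deriv ((1 + fps_X * fps_X) * fps_deriv E + fps_const p * E) = 2*fps_X*fps_deriv E + (1+fps_X*fps_X)*fps_deriv (fps_deriv E) + fps_const p * fps_deriv E"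
      by (simp del: fps_const_add fps_const_mult fps_const_neg fps_const_sub add: algebra_simps)
    ultimately show ?thesis by simp
  qed
  note HO = H_ode[OF hc, of a b, folded H_def]
  have d2: "fps_deriv (fps_deriv G) = fps_deriv (fps_deriv E) * H + 2 * fps_deriv E * fps_deriv H + E * fps_deriv (fps_deriv H)"
    unfolding GEH by (simp add: algebra_simps)
  have d1: "fps_deriv G = fps_deriv E * H + E * fps_deriv H"
    unfolding GEH by (simp add: algebra_simps)
  note L = ringL[OF R1 R2 HO d2 d1 GEH]
  have Lc: "fps_nth F n = 0" if "F = 0" for F :: "complex fps" and n using that by simp
  define N0 where "N0 \<equiv> \<lambda>n::nat. ((a + of_nat n) * (b + of_nat n) - p * (c + 2 * of_nat n))"
  define N1 where "N1 \<equiv> \<lambda>n::nat. (p * (a + b + 2 * of_nat n - 1) - 2 * (of_nat n - 1) * (c + of_nat n - 2) - p ^ 2)"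
  define N2 where "N2 \<equiv> \<lambda>n::nat. (2 * (a + of_nat n - 2) * (b + of_nat n - 2) - p * (c + 2 * of_nat n - 6) + p ^ 2)"
  define N3 where "N3 \<equiv> \<lambda>n::nat. (p * (a + b + 2 * of_nat n - 7) - (of_nat n - 3) * (c + of_nat n - 4))"
  define N4 where "N4 \<equiv> \<lambda>n::nat. ((a + of_nat n - 4) * (b + of_nat n - 4))"
  define K where "K = (\<lambda>n. Lexp fps_X (fps_const p) (fps_const c) (fps_const a) (fps_const b) G (fps_deriv G) (fps_deriv (fps_deriv G)) $ n)"
  have K0: "K n = 0" for n unfolding K_def using Lc[OF L] by simp
  have Kform: "K n = (of_nat n + 1) * (c + of_nat n) * u (n + 1) - N0 n * u n - N1 n * u (n - 1)
      - N2 n * u (n - 2) - N3 n * u (n - 3) - N4 n * u (n - 4)" if n4: "n \<ge> 4" for n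
  proof -
    have "n = 4 \<or> n = 5 \<or> n = (n - 6) + 6" using n4 by arith
    then consider "n = 4" | "n = 5" | m where "n = m + 6"
      by blast
    then show ?thesis
    proof cases
      case 1
      then show ?thesis unfolding N0_def N1_def N2_def N3_def N4_def K_def
        apply (simp only: Lexp_def fps_add_nth fps_sub_nth fps_neg_nth fps_mult_left_const_nth
            fps_mult_numeral_left fps_X_power_mult_nth fps_X_mult_nth fps_deriv_nth G_def fps_nth_Abs_fps)
        apply (simp add: eval_nat_numeral algebra_simps)
        done
    next
      case 2
      then show ?thesis unfolding N0_def N1_def N2_def N3_def N4_def K_def
        apply (simp only: Lexp_def fps_add_nth fps_sub_nth fps_neg_nth fps_mult_left_const_nth
            fps_mult_numeral_left fps_X_power_mult_nth fps_X_mult_nth fps_deriv_nth G_def fps_nth_Abs_fps)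
        apply (simp add: eval_nat_numeral algebra_simps)
        done
    next
      case 3
      then show ?thesis unfolding N0_def N1_def N2_def N3_def N4_def K_def
        apply (simp only: Lexp_def fps_add_nth fps_sub_nth fps_neg_nth fps_mult_left_const_nth
            fps_mult_numeral_left fps_X_power_mult_nth fps_X_mult_nth fps_deriv_nth G_def fps_nth_Abs_fps)
        apply (simp add: eval_nat_numeral algebra_simps)
        done
    qed
  qed
  have rec: "u (n + 1) = \<beta>0 n * u n + \<beta>1 n * u (n - 1) + \<beta>2 n * u (n - 2) + \<beta>3 n * u (n - 3) + \<beta>4 n * u (n - 4)"
    if n4: "n \<ge> 4" for n
  proof -
    have cn: "c + of_nat n \<noteq> 0" using hc[of n] by (auto simp: add_eq_0_iff)
    have n1: "(of_nat n + 1 :: complex) \<noteq> 0"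
      by (metis of_nat_Suc of_nat_eq_0_iff add.commute nat.distinct(1))
    have D: "(of_nat n + 1) * (c + of_nat n) \<noteq> 0" using cn n1 by simp
    have "(of_nat n + 1) * (c + of_nat n) * u (n + 1) = N0 n * u n + N1 n * u (n - 1)
      + N2 n * u (n - 2) + N3 n * u (n - 3) + N4 n * u (n - 4)"
      using Kform[OF n4] K0[of n] by (simp add: algebra_simps)
    then have "u (n + 1) = (N0 n * u n + N1 n * u (n - 1)
      + N2 n * u (n - 2) + N3 n * u (n - 3) + N4 n * u (n - 4)) / ((of_nat n + 1) * (c + of_nat n))"
      using D by (simp add: eq_divide_eq mult.commute)
    also have "\<dots> = N0 n / ((of_nat n + 1) * (c + of_nat n)) * u n + N1 n / ((of_nat n + 1) * (c + of_nat n)) * u (n - 1)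
      + N2 n / ((of_nat n + 1) * (c + of_nat n)) * u (n - 2) + N3 n / ((of_nat n + 1) * (c + of_nat n)) * u (n - 3)
      + N4 n / ((of_nat n + 1) * (c + of_nat n)) * u (n - 4)"
      by (rule div5)
    finally show ?thesis
      unfolding \<beta>0_def \<beta>1_def \<beta>2_def \<beta>3_def \<beta>4_def N0_def N1_def N2_def N3_def N4_def .
  qed
  have cgen: "c + of_nat k \<noteq> 0" for k using hc[of k] by (auto simp: add_eq_0_iff)
  have c0: "c \<noteq> 0" using cgen[of 0] by simp
  have c1: "c + 1 \<noteq> 0" using cgen[of 1] by simp
  have c2: "c + 2 \<noteq> 0" using cgen[of 2] by simp
  have c3: "c + 3 \<noteq> 0" using cgen[of 3] by simp
  have e0: "E $ 0 = 1"
    using fps_nth_fps_expansion[OF fE, of 0] by simp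
  have R1': "fps_deriv E + fps_X * (fps_X * fps_deriv E) + fps_const p * E = 0"
  proof -
    have "(1 + fps_X * fps_X) * fps_deriv E + fps_const p * E = fps_deriv E + fps_X * (fps_X * fps_deriv E) + fps_const p * E"
      by (simp only: distrib_right mult_1 mult.assoc)
    then show ?thesis using R1 by simp
  qed
  have Rk: "(fps_deriv E + fps_X * (fps_X * fps_deriv E) + fps_const p * E) $ k = 0" for k
    using R1' by simp
  have r0: "E $ 1 + p * E $ 0 = 0" using Rk[of 0] by (simp add: eval_nat_numeral)
  have r1: "2 * E $ 2 + p * E $ 1 = 0" using Rk[of 1] by (simp add: eval_nat_numeral)
  have r2: "3 * E $ 3 + E $ 1 + p * E $ 2 = 0" using Rk[of 2] by (simp add: eval_nat_numeral)
  have r3: "4 * E $ 4 + 2 * E $ 2 + p * E $ 3 = 0" using Rk[of 3] by (simp add: eval_nat_numeral)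
  have e1: "E $ 1 = - p" using r0 e0 by (simp add: add_eq_0_iff)
  have e2: "E $ 2 = p^2 / 2" using r1 e1 by (simp add: field_simps power2_eq_square)
  have e3: "E $ 3 = p / 3 - p^3 / 6" using r2 e1 e2 by (simp add: field_simps power2_eq_square power3_eq_cube)
  have e4: "E $ 4 = p^4 / 24 - p^2 / 3"
  proof -
    have "4 * E $ 4 + 2 * (p^2 / 2) + p * (p / 3 - p^3 / 6) = 0" using r3 unfolding e2 e3 .
    then show ?thesis by (simp add: field_simps eval_nat_numeral)
  qed
  have h0: "H $ 0 = 1" by (simp add: H_def hgc_def)
  have h1: "H $ 1 = a * b / c" by (simp add: H_def hgc_def)
  have h2: "H $ 2 = a * (a + 1) * b * (b + 1) / (2 * c * (c + 1))"
    by (simp add: H_def hgc_def pochhammer_Suc eval_nat_numeral mult_ac)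
  have h3: "H $ 3 = a * (a + 1) * (a + 2) * b * (b + 1) * (b + 2) / (6 * c * (c + 1) * (c + 2))"
    using c0 c1 c2 by (simp add: H_def hgc_def pochhammer_Suc eval_nat_numeral field_simps)
  have h4: "H $ 4 = a * (a + 1) * (a + 2) * (a + 3) * b * (b + 1) * (b + 2) * (b + 3) / (24 * c * (c + 1) * (c + 2) * (c + 3))"
    using c0 c1 c2 c3 by (simp add: H_def hgc_def pochhammer_Suc eval_nat_numeral field_simps)
  define xx where "xx k = pochhammer a k * pochhammer b k / pochhammer c k" for k
  have hx: "H $ k = xx k / fact k" for k by (simp add: H_def hgc_def xx_def)
  have uk: "u k = (\<Sum>i=0..k. E $ i * H $ (k - i))" for k
    by (simp add: uG GEH fps_mult_nth)
  have u0: "u 0 = 1" using uk[of 0] e0 h0 by simp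
  have u1: "u 1 = a * b / c - p"
    using uk[of 1] e0 e1 h0 h1 by simp
  have u2: "u 2 = - (a * b * p / c) + a * (a + 1) * b * (b + 1) / (2 * c * (c + 1)) + p ^ 2 / 2"
  proof -
    have "u 2 = E $ 0 * H $ 2 + E $ 1 * H $ 1 + E $ 2 * H $ 0"
      using uk[of 2] by (simp add: eval_nat_numeral)
    also have "\<dots> = 1 * (a * (a + 1) * b * (b + 1) / (2 * c * (c + 1))) + (- p) * (a * b / c) + p^2 / 2 * 1"
      unfolding e0 e1 e2 h0 h1 h2 ..
    also have "\<dots> = - (a * b * p / c) + a * (a + 1) * b * (b + 1) / (2 * c * (c + 1)) + p ^ 2 / 2"
      by (simp add: algebra_simps)
    finally show ?thesis .
  qed
  have u3: "u 3 = a * b * p ^ 2 / (2 * c) - a * (a + 1) * b * (b + 1) * p / (2 * c * (c + 1))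
            + a * (a + 1) * (a + 2) * b * (b + 1) * (b + 2) / (6 * c * (c + 1) * (c + 2))
            + (1 / 3) * (p - p ^ 3 / 2)"
  proof -
    have "u 3 = E $ 0 * H $ 3 + E $ 1 * H $ 2 + E $ 2 * H $ 1 + E $ 3 * H $ 0"
      using uk[of 3] by (simp add: eval_nat_numeral)
    also have "\<dots> = 1 * (a * (a + 1) * (a + 2) * b * (b + 1) * (b + 2) / (6 * c * (c + 1) * (c + 2)))
       + (- p) * (a * (a + 1) * b * (b + 1) / (2 * c * (c + 1))) + p^2 / 2 * (a * b / c) + (p / 3 - p^3 / 6) * 1"
      unfolding e0 e1 e2 e3 h0 h1 h2 h3 ..
    also have "\<dots> = a * b * p ^ 2 / (2 * c) - a * (a + 1) * b * (b + 1) * p / (2 * c * (c + 1))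
            + a * (a + 1) * (a + 2) * b * (b + 1) * (b + 2) / (6 * c * (c + 1) * (c + 2))
            + (1 / 3) * (p - p ^ 3 / 2)"
      by (simp add: algebra_simps diff_divide_distrib add_divide_distrib)
    finally show ?thesis .
  qed
  have u4: "u 4 = (1 / 24) * (6 * a * (a + 1) * b * (b + 1) * p ^ 2 / (c * (c + 1))
            - 4 * a * b * (p ^ 2 - 2) * p / c
            - 4 * pochhammer a 3 * pochhammer b 3 * p / pochhammer c 3
            + pochhammer a 4 * pochhammer b 4 / pochhammer c 4
            + p ^ 4 - 8 * p ^ 2)"
  proof -
    have "u 4 = E $ 0 * H $ 4 + E $ 1 * H $ 3 + E $ 2 * H $ 2 + E $ 3 * H $ 1 + E $ 4 * H $ 0"
      using uk[of 4] by (simp add: eval_nat_numeral)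
    then have u4e: "u 4 = 1 * (xx 4 / 24) + (- p) * (xx 3 / 6) + p^2 / 2 * (xx 2 / 2)
       + (p / 3 - p^3 / 6) * xx 1 + (p^4 / 24 - p^2 / 3) * 1"
      unfolding e0 e1 e2 e3 e4 hx by (simp add: fact_numeral xx_def)
    have x1: "xx 1 = a * b / c" by (simp add: xx_def)
    have x2: "xx 2 = a * (a + 1) * b * (b + 1) / (c * (c + 1))"
      by (simp add: xx_def pochhammer_Suc eval_nat_numeral mult_ac)
    have t1: "6 * a * (a + 1) * b * (b + 1) * p ^ 2 / (c * (c + 1)) = 6 * p^2 * xx 2"
      unfolding x2 by (simp add: mult_ac)
    have t2: "4 * a * b * (p ^ 2 - 2) * p / c = 4 * (p^2 - 2) * p * xx 1"
      unfolding x1 by (simp add: mult_ac)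
    have t3: "4 * pochhammer a 3 * pochhammer b 3 * p / pochhammer c 3 = 4 * p * xx 3"
      by (simp add: xx_def mult_ac)
    have t4: "pochhammer a 4 * pochhammer b 4 / pochhammer c 4 = xx 4"
      by (simp add: xx_def)
    show ?thesis unfolding t1 t2 t3 t4 u4e
      by (simp add: field_simps power2_eq_square power3_eq_cube)
  qed
  show ?thesis
    using u0 u1 u2 u3 u4 rec by blast
qed

end
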